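(* Let $F$ be a field, $A\in\mathrm{Pan}(m,F)$ and $B\in\mathrm{Pan}(n,F)$. Then the Kronecker product $A\,\dot\times\, B$ lies in $\mathrm{Pan}(mn,F)$ and $\mu(A\,\dot\times\, B)=\mu(A)\mu(B)$.
   Context: $\Omega_n=\{0,\dots,n-1\}$ indexes rows and columns of $n\times n$ matrices. The $k$th upward (resp. downward) diagonal of an $n\times n$ matrix consists of positions $(i,j)$ with $i+j\equiv k$ (resp. $i-j\equiv k$) $\pmod n$. An $n\times n$ matrix over $F$ is panmagic if the sums of its entries along all rows, columns, upward diagonals and downward diagonals are equal; this common sum is its magic number $\mu$. $\mathrm{Pan}(n,F)$ denotes the set of $n\times n$ panmagic matrices over $F$. For $A=[a_{i,j}]_{i,j\in\Omega_m}$ and $B=[b_{r,s}]_{r,s\in\Omega_n}$, the Kronecker product $A\,\dot\times\,B$ is the $mn\times mn$ matrix whose $(in+r,\,jn+s)$ entry is $a_{i,j}b_{r,s}$ for $i,j\in\Omega_m$, $r,s\in\Omega_n$. *)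

theory Defs
  imports Main "HOL-Number_Theory.Cong"
begin

text \<open>An n x n matrix over 'a is represented by a function nat => nat => 'a;
  only the entries (i,j) with i,j < n (i.e. in Omega_n) matter.\<close>

definition upward_diag :: "nat \<Rightarrow> nat \<Rightarrow> (nat \<times> nat) set" where
  "upward_diag n k = {(i,j). i < n \<and> j < n \<and> [i + j = k] (mod n)}"

definition downward_diag :: "nat \<Rightarrow> nat \<Rightarrow> (nat \<times> nat) set" where
  "downward_diag n k = {(i,j). i < n \<and> j < n \<and> [int i - int j = int k] (mod int n)}"

definition has_magic_sum :: "nat \<Rightarrow> (nat \<Rightarrow> nat \<Rightarrow> 'a::field) \<Rightarrow> 'a \<Rightarrow> bool" where
  "has_magic_sum n M \<mu> \<longleftrightarrow>
     (\<forall>i<n. (\<Sum>j<n. M i j) = \<mu>) \<and>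
     (\<forall>j<n. (\<Sum>i<n. M i j) = \<mu>) \<and>
     (\<forall>k<n. (\<Sum>(i,j)\<in>upward_diag n k. M i j) = \<mu>) \<and>
     (\<forall>k<n. (\<Sum>(i,j)\<in>downward_diag n k. M i j) = \<mu>)"

definition Pan :: "nat \<Rightarrow> (nat \<Rightarrow> nat \<Rightarrow> 'a::field) set" where
  "Pan n = {M. \<exists>\<mu>. has_magic_sum n M \<mu>}"

definition magic_number :: "nat \<Rightarrow> (nat \<Rightarrow> nat \<Rightarrow> 'a::field) \<Rightarrow> 'a" where
  "magic_number n M = (\<Sum>j<n. M 0 j)"

text \<open>Kronecker product of an m x m matrix A with an n x n matrix B:
  entry (i*n+r, j*n+s) is A i j * B r s.\<close>
definition kron :: "nat \<Rightarrow> (nat \<Rightarrow> nat \<Rightarrow> 'a::field) \<Rightarrow> (nat \<Rightarrow> nat \<Rightarrow> 'a) \<Rightarrow> (nat \<Rightarrow> nat \<Rightarrow> 'a)" where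
  "kron n A B = (\<lambda>p q. A (p div n) (q div n) * B (p mod n) (q mod n))"

end

theory Submission imports Defs begin

lemma sum_split: fixes m n :: nat shows "(\<Sum>p<m*n. g p) = (\<Sum>i<m. \<Sum>r<n. g (i*n+r))"
proof -
  have "(\<Sum>p<m*n. g p) = (\<Sum>i<m. sum g {i*n..<i*n+n})" by (simp only: sum.nat_group)
  also have "\<dots> = (\<Sum>i<m. \<Sum>r<n. g (i*n+r))"
  proof (rule sum.cong[OF refl])
    fix i
    have "sum g {0+i*n..<n+i*n} = (\<Sum>r=0..<n. g (r+i*n))" by (rule sum.shift_bounds_nat_ivl)
    then show "sum g {i*n..<i*n+n} = (\<Sum>r<n. g (i*n+r))"
      by (simp add: add.commute atLeast0LessThan)
  qed
  finally show ?thesis .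
qed

lemma up_param:
  assumes "n > 0"
  shows "(\<Sum>(i,j)\<in>upward_diag n k. M i j) = (\<Sum>i<n. M i (nat ((int k - int i) mod int n)))"
proof -
  let ?f = "\<lambda>i. (i, nat ((int k - int i) mod int n))"
  have img: "upward_diag n k = ?f ` {..<n}"
  proof -
    have key: "[i + j = k] (mod n) \<longleftrightarrow> j = nat ((int k - int i) mod int n)" if "j < n" for i j
    proof -
      have "[i + j = k] (mod n) \<longleftrightarrow> [int i + int j = int k] (mod int n)"
        by (metis cong_int_iff of_nat_add)
      also have "\<dots> \<longleftrightarrow> [int j = int k - int i] (mod int n)"
        by (metis add.commute cong_add_lcancel diff_add_cancel)
      also have "\<dots> \<longleftrightarrow> int j = (int k - int i) mod int n"
        using that assms by (simp add: cong_def)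
      also have "\<dots> \<longleftrightarrow> j = nat ((int k - int i) mod int n)"
      proof -
        have "0 \<le> (int k - int i) mod int n" using assms by simp
        then show ?thesis by linarith
      qed
      finally show ?thesis .
    qed
    have r: "nat ((int k - int i) mod int n) < n" for i using assms
      by (simp add: nat_less_iff)
    show ?thesis unfolding upward_diag_def using key r by auto
  qed
  have "inj_on ?f {..<n}" by (auto simp: inj_on_def)
  then show ?thesis by (simp add: img sum.reindex)
qed


lemma down_param:
  assumes "n > 0"
  shows "(\<Sum>(i,j)\<in>downward_diag n k. M i j) = (\<Sum>i<n. M i (nat ((int i - int k) mod int n)))"
proof -
  let ?f = "\<lambda>i. (i, nat ((int i - int k) mod int n))"
  have img: "downward_diag n k = ?f ` {..<n}"
  proof -
    have key: "[int i - int j = int k] (mod int n) \<longleftrightarrow> j = nat ((int i - int k) mod int n)" if "j < n" for i j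
    proof -
      have "[int i - int j = int k] (mod int n) \<longleftrightarrow> [int j = int i - int k] (mod int n)"
        by (metis cong_diff_iff_cong_0 cong_sym_eq diff_diff_eq2 diff_add_cancel add.commute)
      also have "\<dots> \<longleftrightarrow> int j = (int i - int k) mod int n"
        using that assms by (simp add: cong_def)
      also have "\<dots> \<longleftrightarrow> j = nat ((int i - int k) mod int n)"
      proof -
        have "0 \<le> (int i - int k) mod int n" using assms by simp
        then show ?thesis by linarith
      qed
      finally show ?thesis .
    qed
    have r: "nat ((int i - int k) mod int n) < n" for i using assms
      by (simp add: nat_less_iff)
    show ?thesis unfolding downward_diag_def using key r by auto
  qed
  have "inj_on ?f {..<n}" by (auto simp: inj_on_def)
  then show ?thesis by (simp add: img sum.reindex)
qed

lemma up_all: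
  assumes "n > 0" "has_magic_sum n M \<mu>"
  shows "(\<Sum>i<n. M i (nat ((K - int i) mod int n))) = \<mu>"
proof -
  define k where "k = nat (K mod int n)"
  have k: "k < n" using assms(1) by (simp add: k_def nat_less_iff)
  have "int k = K mod int n" using assms(1) by (simp add: k_def)
  then have "(int k - int i) mod int n = (K - int i) mod int n" for i
    by (metis mod_diff_left_eq)
  then have "(\<Sum>i<n. M i (nat ((K - int i) mod int n))) = (\<Sum>(i,j)\<in>upward_diag n k. M i j)"
    unfolding up_param[OF assms(1)] by (intro sum.cong refl) simp
  also have "\<dots> = \<mu>" using assms(2) k unfolding has_magic_sum_def by blast
  finally show ?thesis .
qed

lemma down_all:
  assumes "n > 0" "has_magic_sum n M \<mu>"
  shows "(\<Sum>i<n. M i (nat ((int i - K) mod int n))) = \<mu>"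
proof -
  define k where "k = nat (K mod int n)"
  have k: "k < n" using assms(1) by (simp add: k_def nat_less_iff)
  have "int k = K mod int n" using assms(1) by (simp add: k_def)
  then have "(int i - int k) mod int n = (int i - K) mod int n" for i
    by (metis mod_diff_right_eq)
  then have "(\<Sum>i<n. M i (nat ((int i - K) mod int n))) = (\<Sum>(i,j)\<in>downward_diag n k. M i j)"
    unfolding down_param[OF assms(1)] by (intro sum.cong refl) simp
  also have "\<dots> = \<mu>" using assms(2) k unfolding has_magic_sum_def by blast
  finally show ?thesis .
qed

lemma mod_prod_split:
  fixes a :: int and m n :: nat
  assumes "n > 0" "m > 0"
  shows "nat (a mod int (m*n)) div n = nat ((a div int n) mod int m)"
    and "nat (a mod int (m*n)) mod n = nat (a mod int n)"
proof -
  have e: "a mod (int n * int m) = int n * (a div int n mod int m) + a mod int n"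
    by (rule zmod_zmult2_eq) simp
  have e2: "a mod int (m*n) = int n * (a div int n mod int m) + a mod int n"
    using e by (simp add: mult.commute)
  have b: "0 \<le> a mod int n" "a mod int n < int n" using assms by auto
  have c: "0 \<le> a div int n mod int m" using assms by auto
  have "(a mod int (m*n)) div int n = a div int n mod int m"
    unfolding e2 using b assms by simp
  moreover have "(a mod int (m*n)) mod int n = a mod int n"
    unfolding e2 using b assms by simp
  moreover have "0 \<le> a mod int (m*n)" using assms by simp
  ultimately show "nat (a mod int (m*n)) div n = nat ((a div int n) mod int m)"
    and "nat (a mod int (m*n)) mod n = nat (a mod int n)"
    by (metis nat_div_distrib nat_int of_nat_0_le_iff, metis nat_mod_distrib nat_int of_nat_0_le_iff)
qed


lemma divmod_aux:
  fixes x :: int and i n :: nat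
  assumes "n > 0"
  shows "(x - int i * int n) div int n = x div int n - int i"
    and "(x - int i * int n) mod int n = x mod int n"
    and "(x + int i * int n) div int n = x div int n + int i"
    and "(x + int i * int n) mod int n = x mod int n"
proof -
  have e: "x - int i * int n = x + (- int i) * int n" by simp
  have nz: "int n \<noteq> 0" using assms by simp
  show "(x - int i * int n) div int n = x div int n - int i"
    unfolding e using div_mult_self1[OF nz, of x "- int i"] by simp
  show "(x - int i * int n) mod int n = x mod int n"
    unfolding e by (rule mod_mult_self1)
  show "(x + int i * int n) div int n = x div int n + int i"
    using div_mult_self1[OF nz, of x "int i"] by simp
  show "(x + int i * int n) mod int n = x mod int n"
    by (rule mod_mult_self1)
qed

lemma dm_aux: "s < n \<Longrightarrow> (j*n+s) div n = j" "s < (n::nat) \<Longrightarrow> (j*n+s) mod n = s" by auto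

lemma kron_rows:
  fixes A B :: "nat \<Rightarrow> nat \<Rightarrow> 'a::field" and m n :: nat
  assumes m: "m > 0" and n: "n > 0" and a: "has_magic_sum m A a" and b: "has_magic_sum n B b"
    and that: "p < m * n"
  shows "(\<Sum>q<(m * n). (kron n A B) p q) = a * b"
proof -
  have pm: "p div n < m" using that by (simp add: less_mult_imp_div_less)
  have pn: "p mod n < n" using n by simp
  have "(\<Sum>q<(m * n). (kron n A B) p q) = (\<Sum>j<m. \<Sum>s<n. A (p div n) j * B (p mod n) s)"
    unfolding sum_split kron_def by (intro sum.cong refl) (simp add: dm_aux)
  also have "\<dots> = (\<Sum>j<m. A (p div n) j) * (\<Sum>s<n. B (p mod n) s)"
    by (simp add: sum_product)
  also have "\<dots> = a * b" using a b pm pn unfolding has_magic_sum_def by simp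
  finally show ?thesis .
qed

lemma kron_cols:
  fixes A B :: "nat \<Rightarrow> nat \<Rightarrow> 'a::field" and m n :: nat
  assumes m: "m > 0" and n: "n > 0" and a: "has_magic_sum m A a" and b: "has_magic_sum n B b"
    and that: "q < m * n"
  shows "(\<Sum>p<(m * n). (kron n A B) p q) = a * b"
proof -
  have pm: "q div n < m" using that by (simp add: less_mult_imp_div_less)
  have pn: "q mod n < n" using n by simp
  have "(\<Sum>p<(m * n). (kron n A B) p q) = (\<Sum>j<m. \<Sum>s<n. A j (q div n) * B s (q mod n))"
    unfolding sum_split kron_def by (intro sum.cong refl) (simp add: dm_aux)
  also have "\<dots> = (\<Sum>j<m. A j (q div n)) * (\<Sum>s<n. B s (q mod n))"
    by (simp add: sum_product)
  also have "\<dots> = a * b" using a b pm pn unfolding has_magic_sum_def by simp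
  finally show ?thesis .
qed

lemma kron_ups:
  fixes A B :: "nat \<Rightarrow> nat \<Rightarrow> 'a::field" and m n :: nat
  assumes m: "m > 0" and n: "n > 0" and a: "has_magic_sum m A a" and b: "has_magic_sum n B b"
  shows "(\<Sum>(p,q)\<in>upward_diag (m * n) k. (kron n A B) p q) = a * b"
proof -
  have "(\<Sum>(p,q)\<in>upward_diag (m * n) k. (kron n A B) p q)
      = (\<Sum>i<m. \<Sum>r<n. (kron n A B) (i*n+r) (nat ((int k - int (i*n+r)) mod int (m * n))))"
    using up_param[OF mult_pos_pos[OF m n], where k=k and M="(kron n A B)"] by (simp add: sum_split)
  also have "\<dots> = (\<Sum>i<m. \<Sum>r<n. A i (nat (((int k - int r) div int n - int i) mod int m))
                                 * B r (nat ((int k - int r) mod int n)))"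
  proof (intro sum.cong refl)
    fix i r assume i: "i \<in> {..<m}" and r: "r \<in> {..<n}"
    have e: "int k - int (i*n+r) = (int k - int r) - int i * int n" by simp
    show "(kron n A B) (i*n+r) (nat ((int k - int (i*n+r)) mod int (m * n))) =
          A i (nat (((int k - int r) div int n - int i) mod int m)) * B r (nat ((int k - int r) mod int n))"
      unfolding kron_def e mod_prod_split[OF n m] divmod_aux[OF n] using r dm_aux by simp
  qed
  also have "\<dots> = (\<Sum>r<n. B r (nat ((int k - int r) mod int n)) *
                    (\<Sum>i<m. A i (nat (((int k - int r) div int n - int i) mod int m))))"
    by (subst sum.swap) (simp add: sum_distrib_left mult.commute)
  also have "\<dots> = (\<Sum>r<n. B r (nat ((int k - int r) mod int n)) * a)"
    using up_all[OF m a] by simp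
  also have "\<dots> = b * a" by (simp only: sum_distrib_right[symmetric] up_all[OF n b])
  finally show ?thesis by simp
qed

lemma kron_downs:
  fixes A B :: "nat \<Rightarrow> nat \<Rightarrow> 'a::field" and m n :: nat
  assumes m: "m > 0" and n: "n > 0" and a: "has_magic_sum m A a" and b: "has_magic_sum n B b"
  shows "(\<Sum>(p,q)\<in>downward_diag (m * n) k. (kron n A B) p q) = a * b"
proof -
  have "(\<Sum>(p,q)\<in>downward_diag (m * n) k. (kron n A B) p q)
      = (\<Sum>i<m. \<Sum>r<n. (kron n A B) (i*n+r) (nat ((int (i*n+r) - int k) mod int (m * n))))"
    using down_param[OF mult_pos_pos[OF m n], where k=k and M="(kron n A B)"] by (simp add: sum_split)
  also have "\<dots> = (\<Sum>i<m. \<Sum>r<n. A i (nat ((int i - (- ((int r - int k) div int n))) mod int m))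
                                 * B r (nat ((int r - int k) mod int n)))"
  proof (intro sum.cong refl)
    fix i r assume i: "i \<in> {..<m}" and r: "r \<in> {..<n}"
    have e: "int (i*n+r) - int k = (int r - int k) + int i * int n" by simp
    show "(kron n A B) (i*n+r) (nat ((int (i*n+r) - int k) mod int (m * n))) =
          A i (nat ((int i - (- ((int r - int k) div int n))) mod int m)) * B r (nat ((int r - int k) mod int n))"
      unfolding kron_def e mod_prod_split[OF n m] divmod_aux[OF n] using r dm_aux by (simp add: add.commute)
  qed
  also have "\<dots> = (\<Sum>r<n. B r (nat ((int r - int k) mod int n)) *
                    (\<Sum>i<m. A i (nat ((int i - (- ((int r - int k) div int n))) mod int m))))"
    by (subst sum.swap) (simp add: sum_distrib_left mult.commute)
  also have "\<dots> = (\<Sum>r<n. B r (nat ((int r - int k) mod int n)) * a)"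
  proof (intro sum.cong refl)
    fix r
    show "B r (nat ((int r - int k) mod int n)) *
                    (\<Sum>i<m. A i (nat ((int i - (- ((int r - int k) div int n))) mod int m)))
          = B r (nat ((int r - int k) mod int n)) * a"
      using down_all[OF m a, of "- ((int r - int k) div int n)"] by simp
  qed
  also have "\<dots> = b * a" by (simp only: sum_distrib_right[symmetric] down_all[OF n b])
  finally show ?thesis by simp
qed

theorem corollary3p1:
  fixes A B :: "nat \<Rightarrow> nat \<Rightarrow> 'a::field" and m n :: nat
  assumes "A \<in> Pan m" and "B \<in> Pan n"
  shows "kron n A B \<in> Pan (m * n) \<and>
         magic_number (m * n) (kron n A B) = magic_number m A * magic_number n B"
proof (cases "m = 0 \<or> n = 0")
  case True
  then show ?thesis
    by (auto simp: Pan_def has_magic_sum_def magic_number_def upward_diag_def downward_diag_def)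
next
  case False
  then have m: "m > 0" and n: "n > 0" by auto
  obtain a where a: "has_magic_sum m A a" using assms(1) by (auto simp: Pan_def)
  obtain b where b: "has_magic_sum n B b" using assms(2) by (auto simp: Pan_def)
  have N: "m * n > 0" using m n by simp
  have hm: "has_magic_sum (m * n) (kron n A B) (a * b)"
    unfolding has_magic_sum_def
    using kron_rows[OF m n a b] kron_cols[OF m n a b] kron_ups[OF m n a b] kron_downs[OF m n a b] by blast
  have "magic_number (m * n) (kron n A B) = a * b"
    unfolding magic_number_def using kron_rows[OF m n a b, of 0] N by simp
  moreover have "magic_number m A = a" using a m unfolding magic_number_def has_magic_sum_def by simp
  moreover have "magic_number n B = b" using b n unfolding magic_number_def has_magic_sum_def by simp
  ultimately show ?thesis using hm by (auto simp: Pan_def)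
qed

end
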